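(* Let $K\ge2$. Then for all $x,y\in\mathbb{R}^K$, $\|\mathrm{softmax}(x)-\mathrm{softmax}(y)\|_2\le L_K\|x-y\|_2$ with a constant $L_K\le\frac{K-1}{K}$.
   Context: $\mathrm{softmax}:\mathbb{R}^K\to\mathbb{R}^K$, $\{\mathrm{softmax}(x)\}_i=e^{x_i}/\sum_{j=1}^Ke^{x_j}$; $\|\cdot\|_2$ is the Euclidean norm. *)

theory Defs
  imports "HOL-Analysis.Analysis"
begin

definition softmax :: "real ^ 'n \<Rightarrow> real ^ 'n" where
  "softmax x = (\<chi> i. exp (x $ i) / (\<Sum>j\<in>UNIV. exp (x $ j)))"

end

theory Submission
  imports Defs
begin

definition cov :: "('n::finite \<Rightarrow> real) \<Rightarrow> ('n \<Rightarrow> real) \<Rightarrow> ('n \<Rightarrow> real) \<Rightarrow> real" where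
  "cov p a b = (\<Sum>i\<in>UNIV. p i * a i * b i) - (\<Sum>i\<in>UNIV. p i * a i) * (\<Sum>i\<in>UNIV. p i * b i)"

lemma var_double:
  fixes p v :: "'n::finite \<Rightarrow> real"
  assumes "sum p UNIV = 1"
  shows "2 * cov p v v = (\<Sum>i\<in>UNIV. \<Sum>j\<in>UNIV. p i * p j * (v i - v j)^2)"
proof -
  have A: "(\<Sum>i\<in>UNIV. p i * v i * v i) = (\<Sum>i\<in>UNIV. \<Sum>j\<in>UNIV. p i * p j * (v i)^2)"
    by (simp add: sum_distrib_left[symmetric] sum_distrib_right[symmetric] assms power2_eq_square mult.assoc mult.left_commute)
  have A2: "(\<Sum>i\<in>UNIV. p i * v i * v i) = (\<Sum>i\<in>UNIV. \<Sum>j\<in>UNIV. p i * p j * (v j)^2)"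
    using A by (subst sum.swap) (simp add: mult.commute)
  have B: "(\<Sum>i\<in>UNIV. p i * v i) * (\<Sum>i\<in>UNIV. p i * v i) = (\<Sum>i\<in>UNIV. \<Sum>j\<in>UNIV. p i * p j * (v i * v j))"
    by (simp add: sum_product algebra_simps)
  have "2 * cov p v v = (\<Sum>i\<in>UNIV. \<Sum>j\<in>UNIV. p i * p j * (v i)^2) + (\<Sum>i\<in>UNIV. \<Sum>j\<in>UNIV. p i * p j * (v j)^2)
      - 2 * (\<Sum>i\<in>UNIV. \<Sum>j\<in>UNIV. p i * p j * (v i * v j))"
    unfolding cov_def using A A2 B by simp
  also have "\<dots> = (\<Sum>i\<in>UNIV. \<Sum>j\<in>UNIV. p i * p j * (v i - v j)^2)"
    by (simp add: sum.distrib[symmetric] sum_subtractf[symmetric] sum_distrib_left power2_eq_square algebra_simps)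
  finally show ?thesis .
qed

lemma var_nonneg:
  fixes p v :: "'n::finite \<Rightarrow> real"
  assumes "\<And>i. p i \<ge> 0" "sum p UNIV = 1"
  shows "cov p v v \<ge> 0"
proof -
  have "0 \<le> (\<Sum>i\<in>UNIV. \<Sum>j\<in>UNIV. p i * p j * (v i - v j)^2)"
    by (intro sum_nonneg mult_nonneg_nonneg) (auto simp: assms)
  then show ?thesis using var_double[OF assms(2), of v] by simp
qed

lemma var_bound:
  fixes p v :: "'n::finite \<Rightarrow> real"
  assumes "\<And>i. p i \<ge> 0" "sum p UNIV = 1"
  shows "cov p v v \<le> (\<Sum>i\<in>UNIV. (v i)^2) / 2"
proof -
  have pt: "\<And>i j. p i * p j * (v i - v j)^2 \<le> p i * p j * (2 * (v i)^2 + 2 * (v j)^2) - (if i = j then 4 * (p i)^2 * (v i)^2 else 0)"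
  proof -
    fix i j
    have "0 \<le> p i * p j" using assms by simp
    moreover have "(v i - v j)^2 \<le> 2 * (v i)^2 + 2 * (v j)^2"
    proof -
      have "(v i - v j)^2 + (v i + v j)^2 = 2*(v i)^2 + 2*(v j)^2" by (simp add: power2_eq_square algebra_simps)
      moreover have "0 \<le> (v i + v j)^2" by simp
      ultimately show ?thesis by linarith
    qed
    ultimately show "p i * p j * (v i - v j)^2 \<le> p i * p j * (2 * (v i)^2 + 2 * (v j)^2) - (if i = j then 4 * (p i)^2 * (v i)^2 else 0)"
      by (cases "i = j") (auto simp: power2_eq_square intro: mult_left_mono)
  qed
  have "(\<Sum>i\<in>UNIV. \<Sum>j\<in>UNIV. p i * p j * (v i - v j)^2) \<le>
     (\<Sum>i\<in>UNIV. \<Sum>j\<in>UNIV. p i * p j * (2 * (v i)^2 + 2 * (v j)^2) - (if i = j then 4 * (p i)^2 * (v i)^2 else 0))"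
    by (intro sum_mono pt)
  also have "\<dots> = (\<Sum>i\<in>UNIV. \<Sum>j\<in>UNIV. p i * p j * (2 * (v i)^2)) + (\<Sum>i\<in>UNIV. \<Sum>j\<in>UNIV. p i * p j * (2 * (v j)^2))
      - (\<Sum>i\<in>UNIV. 4 * (p i)^2 * (v i)^2)"
    by (simp add: sum_subtractf sum.distrib algebra_simps)
  also have "(\<Sum>i\<in>UNIV. \<Sum>j\<in>UNIV. p i * p j * (2 * (v j)^2)) = (\<Sum>i\<in>UNIV. \<Sum>j\<in>UNIV. p i * p j * (2 * (v i)^2))"
    by (subst sum.swap) (simp add: mult.commute)
  also have "(\<Sum>i\<in>UNIV. \<Sum>j\<in>UNIV. p i * p j * (2 * (v i)^2)) = (\<Sum>i\<in>UNIV. p i * (2 * (v i)^2))"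
  proof -
    have "\<And>i. (\<Sum>j\<in>UNIV. p i * p j * (2 * (v i)^2)) = p i * (2 * (v i)^2) * sum p UNIV"
      by (simp add: sum_distrib_left sum_distrib_right algebra_simps)
    then show ?thesis using assms(2) by simp
  qed
  also have "(\<Sum>i\<in>UNIV. p i * (2 * (v i)^2)) + (\<Sum>i\<in>UNIV. p i * (2 * (v i)^2)) - (\<Sum>i\<in>UNIV. 4 * (p i)^2 * (v i)^2)
     = (\<Sum>i\<in>UNIV. 4 * (p i * (1 - p i)) * (v i)^2)"
  proof -
    have "(\<Sum>i\<in>UNIV. 4 * (p i * (1 - p i)) * (v i)^2) = (\<Sum>i\<in>UNIV. p i * (2 * (v i)^2) + p i * (2 * (v i)^2) - 4 * (p i)^2 * (v i)^2)"
      by (rule sum.cong) (auto simp: algebra_simps power2_eq_square)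
    then show ?thesis by (simp only: sum.distrib sum_subtractf)
  qed
  also have "\<dots> \<le> (\<Sum>i\<in>UNIV. (v i)^2)"
  proof (intro sum_mono)
    fix i
    have "4 * (p i * (1 - p i)) \<le> 1"
    proof -
      have "0 \<le> (2 * p i - 1)^2" by simp
      moreover have "(2 * p i - 1)^2 = 1 - 4 * (p i * (1 - p i))" by (simp add: power2_eq_square algebra_simps)
      ultimately show ?thesis by linarith
    qed
    then show "4 * (p i * (1 - p i)) * (v i)^2 \<le> (v i)^2"
      using mult_right_mono[of "4 * (p i * (1 - p i))" 1 "(v i)^2"] by simp
  qed
  finally show ?thesis using var_double[OF assms(2), of v] by simp
qed

lemma cov_scale1: "cov p (\<lambda>i. s * a i) b = s * cov p a b"
proof -
  have 1: "(\<Sum>i\<in>UNIV. p i * (s * a i) * b i) = s * (\<Sum>i\<in>UNIV. p i * a i * b i)"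
    by (simp add: sum_distrib_left algebra_simps)
  have 2: "(\<Sum>i\<in>UNIV. p i * (s * a i)) = s * (\<Sum>i\<in>UNIV. p i * a i)"
    by (simp add: sum_distrib_left algebra_simps)
  show ?thesis unfolding cov_def 1 2 by (simp add: algebra_simps)
qed
lemma cov_scale2: "cov p a (\<lambda>i. s * b i) = s * cov p a b"
proof -
  have 1: "(\<Sum>i\<in>UNIV. p i * a i * (s * b i)) = s * (\<Sum>i\<in>UNIV. p i * a i * b i)"
    by (simp add: sum_distrib_left algebra_simps)
  have 2: "(\<Sum>i\<in>UNIV. p i * (s * b i)) = s * (\<Sum>i\<in>UNIV. p i * b i)"
    by (simp add: sum_distrib_left algebra_simps)
  show ?thesis unfolding cov_def 1 2 by (simp add: algebra_simps)
qed

lemma cov_sum_bound: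
  fixes p a b :: "'n::finite \<Rightarrow> real"
  assumes "\<And>i. p i \<ge> 0" "sum p UNIV = 1"
  shows "cov p a b \<le> ((\<Sum>i\<in>UNIV. (a i)^2) + (\<Sum>i\<in>UNIV. (b i)^2)) / 4"
proof -
  have "cov p (\<lambda>i. a i - b i) (\<lambda>i. a i - b i) = cov p a a + cov p b b - 2 * cov p a b"
  proof -
    have 1: "(\<Sum>i\<in>UNIV. p i * (a i - b i) * (a i - b i)) = (\<Sum>i\<in>UNIV. p i * a i * a i) + (\<Sum>i\<in>UNIV. p i * b i * b i) - 2 * (\<Sum>i\<in>UNIV. p i * a i * b i)"
    proof -
      have "(\<Sum>i\<in>UNIV. p i * (a i - b i) * (a i - b i)) = (\<Sum>i\<in>UNIV. p i * a i * a i + p i * b i * b i - 2 * (p i * a i * b i))"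
        by (rule sum.cong) (auto simp: algebra_simps)
      also have "\<dots> = (\<Sum>i\<in>UNIV. p i * a i * a i) + (\<Sum>i\<in>UNIV. p i * b i * b i) - 2 * (\<Sum>i\<in>UNIV. p i * a i * b i)"
        by (simp only: sum.distrib sum_subtractf sum_distrib_left)
      finally show ?thesis .
    qed
    have 2: "(\<Sum>i\<in>UNIV. p i * (a i - b i)) = (\<Sum>i\<in>UNIV. p i * a i) - (\<Sum>i\<in>UNIV. p i * b i)"
      by (simp only: sum_subtractf[symmetric] right_diff_distrib)
    show ?thesis unfolding cov_def 1 2 by (simp add: algebra_simps)
  qed
  moreover note var_nonneg[OF assms, of "\<lambda>i. a i - b i"] var_bound[OF assms, of a] var_bound[OF assms, of b]
  ultimately show ?thesis by (simp add: field_simps)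
qed

lemma cov_bound:
  fixes p a b :: "'n::finite \<Rightarrow> real"
  assumes "\<And>i. p i \<ge> 0" "sum p UNIV = 1"
  shows "cov p a b \<le> sqrt (\<Sum>i\<in>UNIV. (a i)^2) * sqrt (\<Sum>i\<in>UNIV. (b i)^2) / 2"
proof -
  define A where "A = sqrt (\<Sum>i\<in>UNIV. (a i)^2)"
  define B where "B = sqrt (\<Sum>i\<in>UNIV. (b i)^2)"
  have A2: "A^2 = (\<Sum>i\<in>UNIV. (a i)^2)" unfolding A_def by (simp add: sum_nonneg)
  have B2: "B^2 = (\<Sum>i\<in>UNIV. (b i)^2)" unfolding B_def by (simp add: sum_nonneg)
  have A0: "A \<ge> 0" "B \<ge> 0" unfolding A_def B_def by (auto simp: sum_nonneg)
  show ?thesis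
  proof (cases "A = 0 \<or> B = 0")
    case True
    then have "(\<forall>i. a i = 0) \<or> (\<forall>i. b i = 0)"
      using A2 B2 by (auto simp: sum_nonneg_eq_0_iff)
    then have "cov p a b = 0" unfolding cov_def by auto
    then show ?thesis using A0 unfolding A_def[symmetric] B_def[symmetric] by simp
  next
    case False
    with A0 have pos: "A > 0" "B > 0" by auto
    define s where "s = sqrt (B / A)"
    have s0: "s > 0" using pos unfolding s_def by simp
    have s2: "s^2 = B / A" using pos unfolding s_def by simp
    have "cov p (\<lambda>i. s * a i) (\<lambda>i. inverse s * b i) \<le>
        ((\<Sum>i\<in>UNIV. (s * a i)^2) + (\<Sum>i\<in>UNIV. (inverse s * b i)^2)) / 4"
      by (rule cov_sum_bound[OF assms])
    moreover have "cov p (\<lambda>i. s * a i) (\<lambda>i. inverse s * b i) = cov p a b"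
      using s0 by (simp add: cov_scale1 cov_scale2)
    moreover have "(\<Sum>i\<in>UNIV. (s * a i)^2) = s^2 * A^2"
      by (simp add: A2 power_mult_distrib sum_distrib_left)
    moreover have "(\<Sum>i\<in>UNIV. (inverse s * b i)^2) = B^2 / s^2"
      by (simp add: B2 power_mult_distrib sum_distrib_left power_inverse divide_inverse mult.commute)
    moreover have "s^2 * A^2 = A * B" using s2 pos by (simp add: power2_eq_square)
    moreover have "B^2 / s^2 = A * B" using s2 pos by (simp add: power2_eq_square)
    ultimately show ?thesis unfolding A_def[symmetric] B_def[symmetric] by simp
  qed
qed


lemma norm_vec_sqrt: "norm (v::real^'n) = sqrt (\<Sum>i\<in>UNIV. (v$i)^2)"
  by (simp add: norm_vec_def L2_set_def)

lemma softmax_lip: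
  fixes x y :: "real^'n"
  shows "norm (softmax x - softmax y) \<le> 1/2 * norm (x - y)"
proof -
  define d where "d = x - y"
  define u where "u = softmax x - softmax y"
  define E where "E = (\<lambda>t i. exp (y$i + t * d$i))"
  define S where "S = (\<lambda>t. \<Sum>j\<in>UNIV. E t j)"
  define h where "h = (\<lambda>t. (\<Sum>i\<in>UNIV. u$i * E t i) / S t)"
  have Spos: "\<And>t. S t > 0" unfolding S_def E_def
    by (intro sum_pos) auto
  have sm: "\<And>t i. softmax (y + t *\<^sub>R d) $ i = E t i / S t"
    unfolding softmax_def E_def S_def by simp
  have hs: "\<And>t. h t = (\<Sum>i\<in>UNIV. u$i * softmax (y + t *\<^sub>R d) $ i)"
    unfolding h_def sm by (simp add: sum_divide_distrib)
  have h1: "h 1 - h 0 = (norm u)^2"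
  proof -
    have "h 1 - h 0 = (\<Sum>i\<in>UNIV. u$i * softmax x $ i) - (\<Sum>i\<in>UNIV. u$i * softmax y $ i)"
      unfolding hs d_def by simp
    also have "\<dots> = (\<Sum>i\<in>UNIV. u$i * u$i)"
      unfolding u_def by (simp add: sum_subtractf[symmetric] right_diff_distrib)
    also have "\<dots> = (norm u)^2"
      by (simp add: power2_norm_eq_inner inner_vec_def)
    finally show ?thesis .
  qed
  define h' where "h' = (\<lambda>t. cov (\<lambda>i. E t i / S t) (\<lambda>i. u$i) (\<lambda>i. d$i))"
  have der: "DERIV h t :> h' t" for t
  proof -
    have dE: "\<And>i. ((\<lambda>t. E t i) has_real_derivative E t i * d$i) (at t)"
      unfolding E_def by (auto intro!: derivative_eq_intros)
    have dN: "((\<lambda>t. \<Sum>i\<in>UNIV. u$i * E t i) has_real_derivative (\<Sum>i\<in>UNIV. u$i * (E t i * d$i))) (at t)"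
      by (intro DERIV_sum DERIV_cmult dE)
    have dS: "(S has_real_derivative (\<Sum>i\<in>UNIV. E t i * d$i)) (at t)"
      unfolding S_def by (intro DERIV_sum dE)
    have eq: "((\<Sum>i\<in>UNIV. u$i * (E t i * d$i)) * S t - (\<Sum>i\<in>UNIV. u$i * E t i) * (\<Sum>i\<in>UNIV. E t i * d$i)) / (S t * S t) = h' t"
    proof -
      have "S t \<noteq> 0" using Spos[of t] by simp
      then show ?thesis unfolding h'_def cov_def
        by (simp add: sum_divide_distrib[symmetric] field_simps power2_eq_square)
    qed
    have "DERIV h t :> ((\<Sum>i\<in>UNIV. u$i * (E t i * d$i)) * S t - (\<Sum>i\<in>UNIV. u$i * E t i) * (\<Sum>i\<in>UNIV. E t i * d$i)) / (S t * S t)"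
      unfolding h_def using DERIV_divide[OF dN dS] Spos[of t] by (simp add: power2_eq_square)
    then show ?thesis using eq by simp
  qed
  obtain z where z: "0 < z" "z < 1" "h 1 - h 0 = (1 - 0) * h' z"
    using MVT2[of 0 1 h h'] der by auto
  have p0: "\<And>i. E z i / S z \<ge> 0" using Spos[of z] unfolding E_def by simp
  have p1: "sum (\<lambda>i. E z i / S z) UNIV = 1" using Spos[of z]
    by (simp add: sum_divide_distrib[symmetric] S_def)
  have "(norm u)^2 \<le> norm u * norm d / 2"
    using cov_bound[of "\<lambda>i. E z i / S z" "\<lambda>i. u$i" "\<lambda>i. d$i", OF p0 p1] h1 z(3)
    unfolding h'_def norm_vec_sqrt by simp
  then have "norm u \<le> norm d / 2"
    by (cases "norm u = 0") (auto simp: power2_eq_square)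
  then show ?thesis unfolding u_def d_def by simp
qed

theorem lemma6:
  assumes "CARD('n) \<ge> 2"
  shows "\<exists>L::real. L \<le> (real CARD('n) - 1) / real CARD('n) \<and>
           (\<forall>x y :: real ^ 'n. norm (softmax x - softmax y) \<le> L * norm (x - y))"
proof (intro exI conjI allI)
  have "real CARD('n) \<ge> 2" using assms by simp
  then show "1/2 \<le> (real CARD('n) - 1) / real CARD('n)" by (simp add: field_simps)
  show "\<And>x y :: real^'n. norm (softmax x - softmax y) \<le> 1/2 * norm (x - y)"
    by (rule softmax_lip)
qed

end
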